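(* Let $\Gamma=(M,E)$ be a reaction network with stoichiometric matrix $\mathbb S$ and $n=\dim\ker\mathbb S^T\ge0$. Then $\Gamma$ is nondegenerate if and only if there exists an invertible $(|M|-n)\times(|M|-n)$ Child-Selection matrix of $\Gamma$.
   Context: Reaction $j$ is $\sum_m s^j_m\mathsf m\to\sum_m\tilde s^j_m\mathsf m$ with $s^j_m,\tilde s^j_m\ge0$; $\mathbb S_{mj}=\tilde s^j_m-s^j_m$. A reactivity matrix is an $|E|\times|M|$ matrix $R$ with $R_{jm}>0$ if $s^j_m>0$ and $R_{jm}=0$ otherwise; the symbolic Jacobian is $G=\mathbb S R$. $\Gamma$ is nondegenerate if for some reactivity matrix $R$, $\mathbb S R$ has a nonzero $(|M|-n)\times(|M|-n)$ principal minor. A $k$-Child-Selection ($k$-CS) is a triple $\boldsymbol\kappa=(\kappa,E_\kappa,J)$ with $\kappa\subseteq M$, $E_\kappa\subseteq E$, $|\kappa|=|E_\kappa|=k$, and $J:\kappa\to E_\kappa$ a bijection with $s^{J(m)}_m>0$ for all $m\in\kappa$ (each species is a reactant of its assigned reaction). Its CS-matrix is the $k\times k$ matrix $\mathbb S[\boldsymbol\kappa]_{ml}=\mathbb S_{m,J(l)}$, $m,l\in\kappa$. *)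

theory Defs
  imports "HOL-Analysis.Analysis"
begin

text \<open>A reaction network with species type 'm (the set M = UNIV) and reaction
type 'e (the set E = UNIV), both finite. Reactant coefficients: s j m = s^j_m;
product coefficients: st j m = tilde s^j_m.\<close>

definition stoich :: "('e \<Rightarrow> 'm \<Rightarrow> real) \<Rightarrow> ('e \<Rightarrow> 'm \<Rightarrow> real) \<Rightarrow> 'm \<Rightarrow> 'e \<Rightarrow> real" where
  "stoich s st m j = st j m - s j m"

definition det_on :: "'a set \<Rightarrow> ('a \<Rightarrow> 'a \<Rightarrow> real) \<Rightarrow> real" where
  "det_on K A = (\<Sum>p | p permutes K. of_int (sign p) * (\<Prod>i\<in>K. A i (p i)))"

definition invertible_on :: "'a set \<Rightarrow> ('a \<Rightarrow> 'a \<Rightarrow> real) \<Rightarrow> bool" where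
  "invertible_on K A \<longleftrightarrow> (\<exists>B. (\<forall>i\<in>K. \<forall>k\<in>K. (\<Sum>l\<in>K. A i l * B l k) = (if i = k then 1 else 0))
                              \<and> (\<forall>i\<in>K. \<forall>k\<in>K. (\<Sum>l\<in>K. B i l * A l k) = (if i = k then 1 else 0)))"

definition reactivity_matrix :: "('e \<Rightarrow> 'm \<Rightarrow> real) \<Rightarrow> ('e \<Rightarrow> 'm \<Rightarrow> real) \<Rightarrow> bool" where
  "reactivity_matrix s R \<longleftrightarrow> (\<forall>j m. (s j m > 0 \<longrightarrow> R j m > 0) \<and> (\<not> s j m > 0 \<longrightarrow> R j m = 0))"

definition sym_jacobian :: "('e::finite \<Rightarrow> 'm \<Rightarrow> real) \<Rightarrow> ('e \<Rightarrow> 'm \<Rightarrow> real) \<Rightarrow> ('e \<Rightarrow> 'm \<Rightarrow> real) \<Rightarrow> 'm \<Rightarrow> 'm \<Rightarrow> real" where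
  "sym_jacobian s st R m m' = (\<Sum>j\<in>UNIV. stoich s st m j * R j m')"

definition coker_dim :: "('e::finite \<Rightarrow> 'm::finite \<Rightarrow> real) \<Rightarrow> ('e \<Rightarrow> 'm \<Rightarrow> real) \<Rightarrow> nat" where
  "coker_dim s st = dim {x :: real ^ 'm. \<forall>j. (\<Sum>m\<in>UNIV. stoich s st m j * x $ m) = 0}"

definition nondegenerate :: "('e::finite \<Rightarrow> 'm::finite \<Rightarrow> real) \<Rightarrow> ('e \<Rightarrow> 'm \<Rightarrow> real) \<Rightarrow> bool" where
  "nondegenerate s st \<longleftrightarrow> (\<exists>R. reactivity_matrix s R \<and>
     (\<exists>K. card K = CARD('m) - coker_dim s st \<and> det_on K (sym_jacobian s st R) \<noteq> 0))"

definition child_selection :: "('e \<Rightarrow> 'm \<Rightarrow> real) \<Rightarrow> nat \<Rightarrow> 'm set \<Rightarrow> 'e set \<Rightarrow> ('m \<Rightarrow> 'e) \<Rightarrow> bool" where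
  "child_selection s k \<kappa> E\<kappa> J \<longleftrightarrow> card \<kappa> = k \<and> card E\<kappa> = k \<and> bij_betw J \<kappa> E\<kappa>
      \<and> (\<forall>m\<in>\<kappa>. s (J m) m > 0)"

definition cs_matrix :: "('e \<Rightarrow> 'm \<Rightarrow> real) \<Rightarrow> ('e \<Rightarrow> 'm \<Rightarrow> real) \<Rightarrow> ('m \<Rightarrow> 'e) \<Rightarrow> 'm \<Rightarrow> 'm \<Rightarrow> real" where
  "cs_matrix s st J m l = stoich s st m (J l)"

end

theory Submission
  imports Defs
begin

definition extm :: "'m::finite set \<Rightarrow> ('m \<Rightarrow> 'm \<Rightarrow> real) \<Rightarrow> real^'m^'m" where
  "extm K A = (\<chi> i l. if i \<in> K \<and> l \<in> K then A i l else if i = l then 1 else 0)"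

lemma extm_left:
  "(\<Sum>l\<in>UNIV. extm K A $ i $ l * Y l) = (if i \<in> K then (\<Sum>l\<in>K. A i l * Y l) else Y i)"
proof (cases "i \<in> K")
  case True
  have "(\<Sum>l\<in>UNIV. extm K A $ i $ l * Y l) = (\<Sum>l\<in>UNIV. if l \<in> K then A i l * Y l else 0)"
    by (rule sum.cong) (auto simp: extm_def True)
  also have "\<dots> = (\<Sum>l\<in>K. A i l * Y l)" by (simp add: sum.If_cases)
  finally show ?thesis using True by simp
next
  case False
  have "(\<Sum>l\<in>UNIV. extm K A $ i $ l * Y l) = (\<Sum>l\<in>UNIV. if i = l then Y l else 0)"
    by (rule sum.cong) (auto simp: extm_def False)
  also have "\<dots> = Y i" by simp
  finally show ?thesis using False by simp
qed

lemma extm_right: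
  "(\<Sum>l\<in>UNIV. Y l * extm K A $ l $ k) = (if k \<in> K then (\<Sum>l\<in>K. Y l * A l k) else Y k)"
proof (cases "k \<in> K")
  case True
  have "(\<Sum>l\<in>UNIV. Y l * extm K A $ l $ k) = (\<Sum>l\<in>UNIV. if l \<in> K then Y l * A l k else 0)"
    by (rule sum.cong) (auto simp: extm_def True)
  also have "\<dots> = (\<Sum>l\<in>K. Y l * A l k)" by (simp add: sum.If_cases)
  finally show ?thesis using True by simp
next
  case False
  have "(\<Sum>l\<in>UNIV. Y l * extm K A $ l $ k) = (\<Sum>l\<in>UNIV. if l = k then Y l else 0)"
    by (rule sum.cong) (auto simp: extm_def False)
  also have "\<dots> = Y k" by simp
  finally show ?thesis using False by simp
qed

lemma extm_mult:
  "extm K A ** extm K B = extm K (\<lambda>i j. \<Sum>l\<in>K. A i l * B l j)"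
proof -
  have "(\<Sum>l\<in>UNIV. extm K A $ i $ l * extm K B $ l $ j) = extm K (\<lambda>i j. \<Sum>l\<in>K. A i l * B l j) $ i $ j"
    for i j
  proof (cases "i \<in> K")
    case True
    note ex = extm_left[of K A i "\<lambda>l. extm K B $ l $ j"]
    show ?thesis
    proof (cases "j \<in> K")
      case True
      have "(\<Sum>l\<in>K. A i l * extm K B $ l $ j) = (\<Sum>l\<in>K. A i l * B l j)"
        by (rule sum.cong) (auto simp: extm_def True)
      then show ?thesis using ex \<open>i \<in> K\<close> True by (simp add: extm_def)
    next
      case False
      have "(\<Sum>l\<in>K. A i l * extm K B $ l $ j) = 0"
        by (rule sum.neutral) (auto simp: extm_def False)
      then show ?thesis using ex \<open>i \<in> K\<close> False by (auto simp: extm_def)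
    qed
  next
    case False
    then show ?thesis using extm_left[of K A i "\<lambda>l. extm K B $ l $ j"] by (simp add: extm_def)
  qed
  then show ?thesis by (simp add: vec_eq_iff matrix_matrix_mult_def)
qed

lemma extm_one: "mat 1 = extm K (\<lambda>i j. if i = j then 1 else 0)"
  by (simp add: vec_eq_iff mat_def extm_def)

lemma invertible_on_extm: "invertible_on K A \<longleftrightarrow> invertible (extm K A)"
proof
  assume "invertible_on K A"
  then obtain B where B1: "\<forall>i\<in>K. \<forall>k\<in>K. (\<Sum>l\<in>K. A i l * B l k) = (if i = k then 1 else 0)"
    and B2: "\<forall>i\<in>K. \<forall>k\<in>K. (\<Sum>l\<in>K. B i l * A l k) = (if i = k then 1 else 0)"
    unfolding invertible_on_def by blast
  have "extm K A ** extm K B = mat 1"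
    unfolding extm_mult using B1 by (simp add: extm_def vec_eq_iff mat_def)
  moreover have "extm K B ** extm K A = mat 1"
    unfolding extm_mult using B2 by (simp add: extm_def vec_eq_iff mat_def)
  ultimately show "invertible (extm K A)" unfolding invertible_def by blast
next
  assume "invertible (extm K A)"
  then obtain A' where A1: "extm K A ** A' = mat 1" and A2: "A' ** extm K A = mat 1"
    unfolding invertible_def by blast
  have "(\<Sum>l\<in>K. A i l * A' $ l $ k) = (if i = k then 1 else 0)" if "i \<in> K" "k \<in> K" for i k
  proof -
    have "(extm K A ** A') $ i $ k = (if i = k then 1 else 0)" using A1 by (simp add: mat_def)
    then show ?thesis using extm_left[of K A i "\<lambda>l. A' $ l $ k"] that
      by (simp add: matrix_matrix_mult_def)
  qed
  moreover have "(\<Sum>l\<in>K. A' $ i $ l * A l k) = (if i = k then 1 else 0)" if "i \<in> K" "k \<in> K" for i k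
  proof -
    have "(A' ** extm K A) $ i $ k = (if i = k then 1 else 0)" using A2 by (simp add: mat_def)
    then show ?thesis using extm_right[of "\<lambda>l. A' $ i $ l" K A k] that
      by (simp add: matrix_matrix_mult_def)
  qed
  ultimately show "invertible_on K A" unfolding invertible_on_def
    by (intro exI[of _ "\<lambda>i j. A' $ i $ j"]) blast
qed

lemma det_extm: "det (extm K A) = det_on K A"
proof -
  have "det_on K A = (\<Sum>p | p permutes K. of_int (sign p) * (\<Prod>i\<in>UNIV. extm K A $ i $ p i))"
    unfolding det_on_def
  proof (rule sum.cong)
    fix p assume "p \<in> {p. p permutes K}"
    then have p: "p permutes K" by simp
    have "(\<Prod>i\<in>K. A i (p i)) = (\<Prod>i\<in>UNIV. extm K A $ i $ p i)"
    proof (rule prod.mono_neutral_cong_left)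
      show "\<forall>i\<in>UNIV - K. extm K A $ i $ p i = 1"
        using p by (auto simp: extm_def permutes_not_in)
      show "\<And>x. x \<in> K \<Longrightarrow> A x (p x) = extm K A $ x $ p x"
        using p by (auto simp: extm_def permutes_in_image)
    qed auto
    then show "of_int (sign p) * (\<Prod>i\<in>K. A i (p i)) = of_int (sign p) * (\<Prod>i\<in>UNIV. extm K A $ i $ p i)"
      by simp
  qed simp
  also have "\<dots> = det (extm K A)"
    unfolding det_def
  proof (rule sum.mono_neutral_left)
    show "finite {p. p permutes (UNIV :: 'a set)}" by (simp add: finite_permutations)
    show "{p. p permutes K} \<subseteq> {p. p permutes UNIV}" by (auto intro: permutes_subset)
    show "\<forall>p\<in>{p. p permutes UNIV} - {p. p permutes K}. of_int (sign p) * (\<Prod>i\<in>UNIV. extm K A $ i $ p i) = 0"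
    proof
      fix p assume "p \<in> {p. p permutes UNIV} - {p. p permutes K}"
      then have pu: "p permutes UNIV" and pk: "\<not> p permutes K" by auto
      have "\<exists>i. i \<notin> K \<and> p i \<noteq> i"
      proof (rule ccontr)
        assume "\<not> ?thesis"
        then have "\<forall>x. x \<notin> K \<longrightarrow> p x = x" by blast
        moreover have "\<forall>y. \<exists>!x. p x = y" using pu unfolding permutes_def by blast
        ultimately have "p permutes K" unfolding permutes_def by blast
        with pk show False by simp
      qed
      then obtain i where "i \<notin> K" "p i \<noteq> i" by blast
      then have "extm K A $ i $ p i = 0" by (auto simp: extm_def)
      then have "(\<Prod>i\<in>UNIV. extm K A $ i $ p i) = 0" by (intro prod_zero) auto
      then show "of_int (sign p) * (\<Prod>i\<in>UNIV. extm K A $ i $ p i) = 0" by simp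
    qed
  qed
  finally show ?thesis by simp
qed

lemma invertible_on_iff:
  fixes K :: "'m::finite set"
  shows "invertible_on K A \<longleftrightarrow> det_on K A \<noteq> 0"
  by (simp add: invertible_on_extm invertible_det_nz det_extm)

lemma det_on_eq_cols:
  fixes K :: "'m::finite set"
  assumes "l1 \<in> K" "l2 \<in> K" "l1 \<noteq> l2" "\<forall>i. A i l1 = A i l2"
  shows "det_on K A = 0"
proof -
  have "column l1 (extm K A) = column l2 (extm K A)"
    using assms by (auto simp: column_def extm_def vec_eq_iff)
  then have "det (extm K A) = 0" using det_identical_columns assms(3) by blast
  then show ?thesis by (simp add: det_extm)
qed

lemma det_on_cong:
  assumes "\<forall>i\<in>K. \<forall>l\<in>K. A i l = B i l"
  shows "det_on K A = det_on K B"
  unfolding det_on_def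
proof (rule sum.cong)
  fix p assume "p \<in> {p. p permutes K}"
  then have p: "p permutes K" by simp
  have "(\<Prod>i\<in>K. A i (p i)) = (\<Prod>i\<in>K. B i (p i))"
    using assms p by (intro prod.cong) (auto simp: permutes_in_image)
  then show "of_int (sign p) * (\<Prod>i\<in>K. A i (p i)) = of_int (sign p) * (\<Prod>i\<in>K. B i (p i))" by simp
qed simp

lemma det_on_expand:
  fixes S :: "'a \<Rightarrow> 'b \<Rightarrow> real" and R :: "'b \<Rightarrow> 'a \<Rightarrow> real"
  assumes fK: "finite K" and fL: "finite L"
  shows "det_on K (\<lambda>i l. \<Sum>j\<in>L. S i j * R j l)
       = (\<Sum>J\<in>PiE K (\<lambda>_. L). (\<Prod>l\<in>K. R (J l) l) * det_on K (\<lambda>i l. S i (J l)))"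
proof -
  have step: "(\<Prod>i\<in>K. \<Sum>j\<in>L. S i j * R j (p i))
      = (\<Sum>J\<in>PiE K (\<lambda>_. L). (\<Prod>l\<in>K. R (J l) l) * (\<Prod>i\<in>K. S i (J (p i))))"
    if p: "p permutes K" for p
  proof -
    define \<psi> where "\<psi> J = (\<lambda>i. if i \<in> K then J (p i) else undefined)" for J :: "'a \<Rightarrow> 'b"
    define \<phi> where "\<phi> J = (\<lambda>i. if i \<in> K then J (inv p i) else undefined)" for J :: "'a \<Rightarrow> 'b"
    have pin: "p i \<in> K \<longleftrightarrow> i \<in> K" for i using p by (simp add: permutes_in_image)
    have ipin: "inv p i \<in> K \<longleftrightarrow> i \<in> K" for i using permutes_inv[OF p] by (simp add: permutes_in_image)
    have pi1: "p (inv p i) = i" for i using p by (simp add: permutes_inverses)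
    have pi2: "inv p (p i) = i" for i using p by (simp add: permutes_inverses)
    have bij: "bij_betw \<psi> (PiE K (\<lambda>_. L)) (PiE K (\<lambda>_. L))"
    proof (rule bij_betw_byWitness[where f' = \<phi>])
      show "\<forall>a\<in>PiE K (\<lambda>_. L). \<phi> (\<psi> a) = a"
        by (auto simp: \<phi>_def \<psi>_def fun_eq_iff pin ipin pi1 PiE_def extensional_def)
      show "\<forall>a\<in>PiE K (\<lambda>_. L). \<psi> (\<phi> a) = a"
        by (auto simp: \<phi>_def \<psi>_def fun_eq_iff pin ipin pi2 PiE_def extensional_def)
      show "\<psi> ` PiE K (\<lambda>_. L) \<subseteq> PiE K (\<lambda>_. L)"
        by (auto simp: \<psi>_def pin PiE_def extensional_def Pi_def)
      show "\<phi> ` PiE K (\<lambda>_. L) \<subseteq> PiE K (\<lambda>_. L)"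
        by (auto simp: \<phi>_def ipin PiE_def extensional_def Pi_def)
    qed
    have "(\<Prod>i\<in>K. \<Sum>j\<in>L. S i j * R j (p i))
        = (\<Sum>g\<in>PiE K (\<lambda>_. L). \<Prod>i\<in>K. S i (g i) * R (g i) (p i))"
      using fK fL by (simp add: prod_sum_PiE)
    also have "\<dots> = (\<Sum>J\<in>PiE K (\<lambda>_. L). \<Prod>i\<in>K. S i (\<psi> J i) * R (\<psi> J i) (p i))"
      by (rule sum.reindex_bij_betw[OF bij, symmetric])
    also have "\<dots> = (\<Sum>J\<in>PiE K (\<lambda>_. L). (\<Prod>l\<in>K. R (J l) l) * (\<Prod>i\<in>K. S i (J (p i))))"
    proof (rule sum.cong)
      fix J assume "J \<in> PiE K (\<lambda>_. L)"
      have "(\<Prod>i\<in>K. S i (\<psi> J i) * R (\<psi> J i) (p i)) = (\<Prod>i\<in>K. S i (J (p i)) * R (J (p i)) (p i))"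
        by (rule prod.cong) (auto simp: \<psi>_def)
      also have "\<dots> = (\<Prod>i\<in>K. S i (J (p i))) * (\<Prod>i\<in>K. R (J (p i)) (p i))"
        by (simp add: prod.distrib)
      also have "(\<Prod>i\<in>K. R (J (p i)) (p i)) = (\<Prod>l\<in>K. R (J l) l)"
        using prod.permute[OF p, of "\<lambda>l. R (J l) l"] by (simp add: comp_def)
      finally show "(\<Prod>i\<in>K. S i (\<psi> J i) * R (\<psi> J i) (p i)) = (\<Prod>l\<in>K. R (J l) l) * (\<Prod>i\<in>K. S i (J (p i)))"
        by simp
    qed simp
    finally show ?thesis .
  qed
  have "det_on K (\<lambda>i l. \<Sum>j\<in>L. S i j * R j l)
      = (\<Sum>p | p permutes K. of_int (sign p) *
           (\<Sum>J\<in>PiE K (\<lambda>_. L). (\<Prod>l\<in>K. R (J l) l) * (\<Prod>i\<in>K. S i (J (p i)))))"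
    unfolding det_on_def by (rule sum.cong) (simp_all add: step)
  also have "\<dots> = (\<Sum>p | p permutes K. \<Sum>J\<in>PiE K (\<lambda>_. L).
           (\<Prod>l\<in>K. R (J l) l) * (of_int (sign p) * (\<Prod>i\<in>K. S i (J (p i)))))"
    by (simp add: sum_distrib_left mult.left_commute)
  also have "\<dots> = (\<Sum>J\<in>PiE K (\<lambda>_. L). \<Sum>p | p permutes K.
           (\<Prod>l\<in>K. R (J l) l) * (of_int (sign p) * (\<Prod>i\<in>K. S i (J (p i)))))"
    by (rule sum.swap)
  also have "\<dots> = (\<Sum>J\<in>PiE K (\<lambda>_. L). (\<Prod>l\<in>K. R (J l) l) * det_on K (\<lambda>i l. S i (J l)))"
    unfolding det_on_def by (simp add: sum_distrib_left)
  finally show ?thesis .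
qed

theorem mainTheorem9:
  fixes s st :: "'e::finite \<Rightarrow> 'm::finite \<Rightarrow> real"
  assumes "\<forall>j m. s j m \<ge> 0" and "\<forall>j m. st j m \<ge> 0"
  shows "nondegenerate s st \<longleftrightarrow>
    (\<exists>\<kappa> E\<kappa> J. child_selection s (CARD('m) - coker_dim s st) \<kappa> E\<kappa> J
        \<and> invertible_on \<kappa> (cs_matrix s st J))"
proof
  assume "nondegenerate s st"
  then obtain R K where R: "reactivity_matrix s R" and cK: "card K = CARD('m) - coker_dim s st"
    and d: "det_on K (sym_jacobian s st R) \<noteq> 0"
    unfolding nondegenerate_def by blast
  have sj: "sym_jacobian s st R = (\<lambda>i l. \<Sum>j\<in>UNIV. stoich s st i j * R j l)"
    by (simp add: fun_eq_iff sym_jacobian_def)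
  have "(\<Sum>J\<in>PiE K (\<lambda>_. UNIV). (\<Prod>l\<in>K. R (J l) l) * det_on K (\<lambda>i l. stoich s st i (J l))) \<noteq> 0"
    using d unfolding sj by (subst (asm) det_on_expand) auto
  then obtain J where "J \<in> PiE K (\<lambda>_. UNIV)"
    and nz: "(\<Prod>l\<in>K. R (J l) l) * det_on K (\<lambda>i l. stoich s st i (J l)) \<noteq> 0"
    by (meson sum.not_neutral_contains_not_neutral)
  have dJ: "det_on K (\<lambda>i l. stoich s st i (J l)) \<noteq> 0" using nz by auto
  have "\<forall>l\<in>K. R (J l) l \<noteq> 0" using nz by auto
  then have pos: "\<forall>l\<in>K. s (J l) l > 0" using R unfolding reactivity_matrix_def by metis
  have inj: "inj_on J K"
  proof (rule inj_onI, rule ccontr)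
    fix x y assume "x \<in> K" "y \<in> K" "J x = J y" "x \<noteq> y"
    then have "det_on K (\<lambda>i l. stoich s st i (J l)) = 0"
      by (intro det_on_eq_cols[of x K y]) auto
    with dJ show False by simp
  qed
  have "child_selection s (CARD('m) - coker_dim s st) K (J ` K) J"
    unfolding child_selection_def using cK inj pos
    by (simp add: card_image inj_on_imp_bij_betw)
  moreover have "invertible_on K (cs_matrix s st J)"
  proof -
    have "cs_matrix s st J = (\<lambda>i l. stoich s st i (J l))" by (simp add: fun_eq_iff cs_matrix_def)
    then show ?thesis using dJ by (simp add: invertible_on_iff)
  qed
  ultimately show "\<exists>\<kappa> E\<kappa> J. child_selection s (CARD('m) - coker_dim s st) \<kappa> E\<kappa> J
        \<and> invertible_on \<kappa> (cs_matrix s st J)" by blast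
next
  assume "\<exists>\<kappa> E\<kappa> J. child_selection s (CARD('m) - coker_dim s st) \<kappa> E\<kappa> J
        \<and> invertible_on \<kappa> (cs_matrix s st J)"
  then obtain K EK J where cs: "child_selection s (CARD('m) - coker_dim s st) K EK J"
    and inv: "invertible_on K (cs_matrix s st J)" by blast
  from cs have cK: "card K = CARD('m) - coker_dim s st" and pos: "\<forall>m\<in>K. s (J m) m > 0"
    unfolding child_selection_def by auto
  have d0: "det_on K (cs_matrix s st J) \<noteq> 0" using inv by (simp add: invertible_on_iff)
  define a :: "'e \<Rightarrow> 'm \<Rightarrow> real" where "a j m = (if m \<in> K \<and> j = J m then 1 else 0)" for j m
  define b :: "'e \<Rightarrow> 'm \<Rightarrow> real" where
    "b j m = (if s j m > 0 \<and> \<not> (m \<in> K \<and> j = J m) then 1 else 0)" for j m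
  define Re where "Re e = (\<lambda>j m. a j m + e * b j m)" for e :: real
  define f where "f e = det_on K (sym_jacobian s st (Re e))" for e
  have "f 0 = det_on K (cs_matrix s st J)"
    unfolding f_def
  proof (rule det_on_cong, intro ballI)
    fix i l assume "i \<in> K" "l \<in> K"
    have "sym_jacobian s st (Re 0) i l = (\<Sum>j\<in>UNIV. if j = J l then stoich s st i j else 0)"
      unfolding sym_jacobian_def Re_def a_def using \<open>l \<in> K\<close> by (intro sum.cong) auto
    also have "\<dots> = cs_matrix s st J i l" by (simp add: cs_matrix_def)
    finally show "sym_jacobian s st (Re 0) i l = cs_matrix s st J i l" .
  qed
  with d0 have f0: "f 0 \<noteq> 0" by simp
  have "isCont f 0"
    unfolding f_def det_on_def sym_jacobian_def Re_def by (intro continuous_intros)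
  then have "(f \<longlongrightarrow> f 0) (at_right 0)"
    unfolding isCont_def filterlim_at_split by blast
  then have "eventually (\<lambda>e. f e \<noteq> 0) (at_right 0)"
    using f0 by (rule tendsto_imp_eventually_ne)
  then have "eventually (\<lambda>e. 0 < e \<and> f e \<noteq> 0) (at_right (0::real))"
    using eventually_conj[OF eventually_at_right_less[of "0::real"]] by blast
  then obtain e :: real where e: "0 < e" "f e \<noteq> 0"
    using eventually_happens'[OF trivial_limit_at_right_real] by blast
  have "reactivity_matrix s (Re e)"
    unfolding reactivity_matrix_def Re_def a_def b_def using e(1) pos by auto
  then show "nondegenerate s st"
    unfolding nondegenerate_def using cK e(2) unfolding f_def by blast
qed

end
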